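(* Let $H=(a_1,a_2)$ be a bounded open interval in $\mathbb R$, $\mathcal B$ a finite index set, $m\ge2$. Assume for each $\beta\in\mathcal B$: $b_\beta,\theta_\beta\in C^m(\bar H)$, $b_\beta>0$ on $\bar H$, $\theta_\beta(H)\subset H$; and that there exist $\mu\ge1$ and $\kappa<1$ with $|\theta_\omega(x)-\theta_\omega(y)|\le\kappa|x-y|$ for all $\omega\in\mathcal B_\mu$, $x,y\in\bar H$. Assume also that $\theta_\beta'(u)\ge0$, $\theta_\beta''(u)\ge0$, $b_\beta'(u)\ge0$, $b_\beta''(u)\ge0$ and $$b_\beta''(u)b_\beta(u)-(1-s)[b_\beta'(u)]^2\ge0$$ for all $\beta\in\mathcal B$, all $u\in H$, and a given real number $s$. If $s>0$ and $v_s$ is the strictly positive $C^m$ eigenvector of $(L_sf)(x)=\sum_{\beta\in\mathcal B}[b_\beta(x)]^sf(\theta_\beta(x))$ on $C^m(\bar H)$, then $Dv_s(u)\ge0$ and $D^2v_s(u)\ge0$ for all $u\in\bar H$. If in addition there is a set $F\subset\bar H$ (possibly empty) such that for all $u\in\bar H\setminus F$ and all $\beta\in\mathcal B$, $b_\beta'(u)>0$ and $b_\beta''(u)b_\beta(u)-(1-s)[b_\beta'(u)]^2>0$, then $Dv_s(u)>0$ and $D^2v_s(u)>0$ for all $u\in\bar H\setminus F$.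
   Context: $D=d/dx$. $\mathcal B_\mu=\{(j_1,\ldots,j_\mu):j_k\in\mathcal B\}$ and $\theta_{(j_1,\ldots,j_\mu)}=\theta_{j_\mu}\circ\cdots\circ\theta_{j_1}$. Under the hypotheses, $L_s$ on $C^m(\bar H)$ has a strictly positive $C^m$ eigenvector with eigenvalue $r(L_s)$, unique up to positive multiples. *)

theory Defs
  imports "HOL-Analysis.Analysis"
begin

definition Cm_on :: "nat \<Rightarrow> real \<Rightarrow> real \<Rightarrow> (real \<Rightarrow> real) \<Rightarrow> bool" where
  "Cm_on m a b f \<longleftrightarrow>
     (\<exists>D. D 0 = f \<and> (\<forall>k\<le>m. continuous_on {a..b} (D k)) \<and>
          (\<forall>k<m. \<forall>x\<in>{a..b}. (D k has_real_derivative D (Suc k) x) (at x within {a..b})))"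

text \<open>theta_omega for omega = (j_1,...,j_mu): theta_{j_mu} o ... o theta_{j_1}.\<close>
definition theta_word :: "('b \<Rightarrow> real \<Rightarrow> real) \<Rightarrow> 'b list \<Rightarrow> real \<Rightarrow> real" where
  "theta_word \<theta> ws x = fold (\<lambda>j y. \<theta> j y) ws x"

definition L_op :: "'b set \<Rightarrow> ('b \<Rightarrow> real \<Rightarrow> real) \<Rightarrow> ('b \<Rightarrow> real \<Rightarrow> real) \<Rightarrow> real
     \<Rightarrow> (real \<Rightarrow> real) \<Rightarrow> real \<Rightarrow> real" where
  "L_op B b \<theta> s f x = (\<Sum>\<beta>\<in>B. (b \<beta> x) powr s * f (\<theta> \<beta> x))"

end

theory Submission imports Defs begin


lemma deriv_unique_Icc:
  fixes f :: "real \<Rightarrow> real"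
  assumes "a < b" "x \<in> {a..b}"
    "(f has_real_derivative d1) (at x within {a..b})"
    "(f has_real_derivative d2) (at x within {a..b})"
  shows "d1 = d2"
  using vector_derivative_unique_within_closed_interval[of a b x f d1 d2] assms
  by (simp add: has_real_derivative_iff_has_vector_derivative)

lemma C2_cont:
  fixes f f1 f2 :: "real \<Rightarrow> real"
  assumes ab: "a < b" and Cm: "Cm_on m a b f" and m2: "m \<ge> 2"
    and d1: "\<forall>x\<in>{a..b}. (f has_real_derivative f1 x) (at x within {a..b})"
    and d2: "\<forall>x\<in>{a..b}. (f1 has_real_derivative f2 x) (at x within {a..b})"
  shows "continuous_on {a..b} f2"
proof -
  obtain D where D0: "D 0 = f" and Dc: "\<forall>k\<le>m. continuous_on {a..b} (D k)"
    and Dd: "\<forall>k<m. \<forall>x\<in>{a..b}. (D k has_real_derivative D (Suc k) x) (at x within {a..b})"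
    using Cm unfolding Cm_on_def by blast
  have e1: "D 1 x = f1 x" if "x \<in> {a..b}" for x
    using deriv_unique_Icc[OF ab that, of f] Dd[rule_format, of 0 x] d1 that m2 D0 by auto
  have e2: "D 2 x = f2 x" if x: "x \<in> {a..b}" for x
  proof -
    have "(f1 has_real_derivative D 2 x) (at x within {a..b})"
      apply (rule has_field_derivative_transform_within[of "D 1" _ _ _ 1])
      using Dd[rule_format, of 1 x] m2 x e1 by (auto simp: numeral_2_eq_2)
    then show ?thesis using deriv_unique_Icc[OF ab x] d2 x by blast
  qed
  have "continuous_on {a..b} (D 2)" using Dc m2 by auto
  then show ?thesis using e2 continuous_on_cong by blast
qed

lemma nonneg_closure:
  fixes g :: "real \<Rightarrow> real"
  assumes "a < b" "continuous_on {a..b} g" "\<forall>x\<in>{a<..<b}. g x \<ge> 0"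
  shows "\<forall>x\<in>{a..b}. g x \<ge> 0"
proof -
  have "g ` closure {a<..<b} \<subseteq> {0..}"
    by (rule image_closure_subset) (use assms in auto)
  then show ?thesis using assms(1) by auto
qed

lemma maps_closure:
  fixes f :: "real \<Rightarrow> real"
  assumes "a < b" "continuous_on {a..b} f" "f ` {a<..<b} \<subseteq> {a<..<b}"
  shows "f ` {a..b} \<subseteq> {a..b}"
proof -
  have "f ` closure {a<..<b} \<subseteq> {a..b}"
    by (rule image_closure_subset) (use assms in auto)
  then show ?thesis using assms(1) by auto
qed

lemma lip_deriv:
  fixes f :: "real \<Rightarrow> real"
  assumes x: "a < x" "x < b"
    and d: "(f has_real_derivative d) (at x within {a..b})"
    and L: "\<forall>y\<in>{a..b}. \<bar>f y - f x\<bar> \<le> k * \<bar>y - x\<bar>"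
  shows "d \<le> k"
proof -
  have F: "at x within {a..b} \<noteq> bot" using at_within_Icc_at[OF x] by simp
  have t: "((\<lambda>y. (f y - f x) / (y - x)) \<longlongrightarrow> d) (at x within {a..b})"
    using d has_field_derivative_iff by blast
  have ev: "eventually (\<lambda>y. (f y - f x) / (y - x) \<le> k) (at x within {a..b})"
    unfolding eventually_at_filter
  proof (intro always_eventually allI impI)
    fix y assume y: "y \<noteq> x" "y \<in> {a..b}"
    have "(f y - f x) / (y - x) \<le> \<bar>f y - f x\<bar> / \<bar>y - x\<bar>" by (metis abs_divide abs_ge_self)
    also have "\<dots> \<le> k" using L y by (simp add: divide_le_eq)
    finally show "(f y - f x) / (y - x) \<le> k" .
  qed
  show ?thesis using tendsto_le[OF F tendsto_const t ev] .
qed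



definition W :: "'b set \<Rightarrow> nat \<Rightarrow> 'b list set" where
  "W B n = {ws. length ws = n \<and> set ws \<subseteq> B}"

fun bw :: "('b \<Rightarrow> real \<Rightarrow> real) \<Rightarrow> real \<Rightarrow> ('b \<Rightarrow> real \<Rightarrow> real) \<Rightarrow> 'b list \<Rightarrow> real \<Rightarrow> real" where
  "bw b s \<theta> [] x = 1"
| "bw b s \<theta> (j # ws) x = b j x powr s * bw b s \<theta> ws (\<theta> j x)"

fun dw :: "('b \<Rightarrow> real \<Rightarrow> real) \<Rightarrow> ('b \<Rightarrow> real \<Rightarrow> real) \<Rightarrow> 'b list \<Rightarrow> real \<Rightarrow> real" where
  "dw \<theta> \<theta>1 [] x = 1"
| "dw \<theta> \<theta>1 (j # ws) x = \<theta>1 j x * dw \<theta> \<theta>1 ws (\<theta> j x)"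

lemma tw_Nil[simp]: "theta_word \<theta> [] x = x" by (simp add: theta_word_def)
lemma tw_Cons[simp]: "theta_word \<theta> (j # ws) x = theta_word \<theta> ws (\<theta> j x)"
  by (simp add: theta_word_def)
lemma tw_append: "theta_word \<theta> (us @ rs) x = theta_word \<theta> rs (theta_word \<theta> us x)"
  by (induction us arbitrary: x) auto

lemma dw_append: "dw \<theta> \<theta>1 (us @ rs) x = dw \<theta> \<theta>1 us x * dw \<theta> \<theta>1 rs (theta_word \<theta> us x)"
  by (induction us arbitrary: x) auto

lemma finite_W: "finite B \<Longrightarrow> finite (W B n)"
  using finite_lists_length_eq[of B n] unfolding W_def by (simp add: conj_commute)

lemma sum_W_Suc:
  assumes "finite B"
  shows "sum f (W B (Suc n)) = (\<Sum>j\<in>B. \<Sum>ws\<in>W B n. f (j # ws))"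
proof -
  have eq: "W B (Suc n) = (\<lambda>(j, ws). j # ws) ` (B \<times> W B n)"
  proof (rule set_eqI, rule iffI)
    fix xs assume "xs \<in> W B (Suc n)"
    then show "xs \<in> (\<lambda>(j, ws). j # ws) ` (B \<times> W B n)"
      unfolding W_def by (cases xs) (auto intro!: image_eqI[where x="(hd xs, tl xs)"])
  qed (auto simp: W_def)
  have inj: "inj_on (\<lambda>(j, ws). j # ws) (B \<times> W B n)" by (auto simp: inj_on_def)
  show ?thesis
    unfolding eq sum.reindex[OF inj]
    by (simp add: sum.cartesian_product case_prod_unfold)
qed

lemma tw_in:
  assumes "\<forall>\<beta>\<in>B. \<forall>x\<in>S. \<theta> \<beta> x \<in> S" "set ws \<subseteq> B" "x \<in> S"
  shows "theta_word \<theta> ws x \<in> S"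
  using assms by (induction ws arbitrary: x) auto

lemma dw_nonneg:
  assumes "\<forall>\<beta>\<in>B. \<forall>x\<in>S. \<theta> \<beta> x \<in> S" "\<forall>\<beta>\<in>B. \<forall>x\<in>S. \<theta>1 \<beta> x \<ge> 0" "set ws \<subseteq> B" "x \<in> S"
  shows "dw \<theta> \<theta>1 ws x \<ge> 0"
  using assms by (induction ws arbitrary: x) auto

lemma bw_nonneg: "bw b s \<theta> ws x \<ge> 0"
  by (induction ws arbitrary: x) auto

lemma tw_deriv:
  fixes \<theta> \<theta>1 :: "'b \<Rightarrow> real \<Rightarrow> real"
  assumes maps: "\<forall>\<beta>\<in>B. \<theta> \<beta> ` S \<subseteq> S"
    and d: "\<forall>\<beta>\<in>B. \<forall>x\<in>S. (\<theta> \<beta> has_real_derivative \<theta>1 \<beta> x) (at x within S)"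
    and ws: "set ws \<subseteq> B" and x: "x \<in> S"
  shows "(theta_word \<theta> ws has_real_derivative dw \<theta> \<theta>1 ws x) (at x within S)"
  using ws x
proof (induction ws arbitrary: x)
  case Nil
  then show ?case by (simp add: theta_word_def DERIV_ident)
next
  case (Cons j ws)
  have j: "j \<in> B" using Cons by auto
  have fx: "\<theta> j x \<in> S" using maps j Cons by auto
  have IH: "(theta_word \<theta> ws has_real_derivative dw \<theta> \<theta>1 ws (\<theta> j x)) (at (\<theta> j x) within \<theta> j ` S)"
    using DERIV_subset[OF Cons.IH[of "\<theta> j x"]] Cons.prems fx maps j by auto
  have "(theta_word \<theta> ws \<circ> \<theta> j has_real_derivative dw \<theta> \<theta>1 ws (\<theta> j x) * \<theta>1 j x) (at x within S)"
    by (rule DERIV_image_chain[OF IH]) (use d j Cons in auto)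
  moreover have "theta_word \<theta> (j # ws) = theta_word \<theta> ws \<circ> \<theta> j" by (auto simp: fun_eq_iff)
  ultimately show ?case by (simp add: mult.commute o_def)
qed



lemma dw_bound:
  fixes \<theta> \<theta>1 :: "'b \<Rightarrow> real \<Rightarrow> real"
  assumes mapsJ: "\<forall>\<beta>\<in>B. \<forall>x\<in>{a<..<b}. \<theta> \<beta> x \<in> {a<..<b}"
    and mapsI: "\<forall>\<beta>\<in>B. \<theta> \<beta> ` {a..b} \<subseteq> {a..b}"
    and d: "\<forall>\<beta>\<in>B. \<forall>x\<in>{a..b}. (\<theta> \<beta> has_real_derivative \<theta>1 \<beta> x) (at x within {a..b})"
    and nn: "\<forall>\<beta>\<in>B. \<forall>x\<in>{a<..<b}. \<theta>1 \<beta> x \<ge> 0"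
    and contr: "\<forall>ws. length ws = \<mu> \<and> set ws \<subseteq> B \<longrightarrow>
        (\<forall>x\<in>{a..b}. \<forall>y\<in>{a..b}. \<bar>theta_word \<theta> ws x - theta_word \<theta> ws y\<bar> \<le> \<kappa> * \<bar>x - y\<bar>)"
  shows "ws \<in> W B (\<mu> * q) \<Longrightarrow> x \<in> {a<..<b} \<Longrightarrow> dw \<theta> \<theta>1 ws x \<le> \<kappa> ^ q"
proof (induction q arbitrary: ws x)
  case 0
  then show ?case by (simp add: W_def)
next
  case (Suc q)
  define us where "us = take \<mu> ws"
  define rs where "rs = drop \<mu> ws"
  have ws: "ws = us @ rs" by (simp add: us_def rs_def)
  have lus: "length us = \<mu>" "set us \<subseteq> B" using Suc.prems unfolding us_def W_def
    by (auto dest: in_set_takeD)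
  have rsW: "rs \<in> W B (\<mu> * q)" using Suc.prems unfolding rs_def W_def
    by (auto dest: in_set_dropD)
  have xI: "x \<in> {a..b}" using Suc.prems by auto
  have der: "(theta_word \<theta> us has_real_derivative dw \<theta> \<theta>1 us x) (at x within {a..b})"
    by (rule tw_deriv[OF mapsI d lus(2) xI])
  have L: "\<forall>y\<in>{a..b}. \<bar>theta_word \<theta> us y - theta_word \<theta> us x\<bar> \<le> \<kappa> * \<bar>y - x\<bar>"
    using contr lus xI by blast
  have k1: "dw \<theta> \<theta>1 us x \<le> \<kappa>"
    using lip_deriv[OF _ _ der L] Suc.prems by auto
  have k0: "0 \<le> dw \<theta> \<theta>1 us x" by (rule dw_nonneg[OF mapsJ nn lus(2)]) (use Suc.prems in auto)
  have txJ: "theta_word \<theta> us x \<in> {a<..<b}" by (rule tw_in[OF mapsJ lus(2)]) (use Suc.prems in auto)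
  have r1: "dw \<theta> \<theta>1 rs (theta_word \<theta> us x) \<le> \<kappa> ^ q" using Suc.IH[OF rsW txJ] .
  have r0: "0 \<le> dw \<theta> \<theta>1 rs (theta_word \<theta> us x)"
    by (rule dw_nonneg[OF mapsJ nn _ txJ]) (use rsW in \<open>auto simp: W_def\<close>)
  have "dw \<theta> \<theta>1 ws x = dw \<theta> \<theta>1 us x * dw \<theta> \<theta>1 rs (theta_word \<theta> us x)"
    by (simp add: ws dw_append)
  also have "\<dots> \<le> \<kappa> * \<kappa> ^ q" by (rule mult_mono[OF k1 r1]) (use k0 k1 r0 in auto)
  finally show ?case by simp
qed

lemma W_0: "W B 0 = {[]}" by (auto simp: W_def)

lemma decay:
  fixes g v :: "real \<Rightarrow> real" and \<theta> \<theta>1 b :: "'b \<Rightarrow> real \<Rightarrow> real"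
  assumes finB: "finite B"
    and mapsJ: "\<forall>\<beta>\<in>B. \<forall>x\<in>J. \<theta> \<beta> x \<in> J"
    and lam: "lam > 0"
    and G: "\<forall>x\<in>J. \<bar>g x\<bar> \<le> G"
    and vmin: "vmin > 0" "\<forall>x\<in>J. v x \<ge> vmin"
    and eig: "\<forall>x\<in>J. (\<Sum>\<beta>\<in>B. b \<beta> x powr s * v (\<theta> \<beta> x)) = lam * v x"
    and rec: "\<forall>x\<in>J. lam * g x \<ge> (\<Sum>\<beta>\<in>B. b \<beta> x powr s * \<theta>1 \<beta> x ^ k * g (\<theta> \<beta> x))"
    and nn: "\<forall>\<beta>\<in>B. \<forall>x\<in>J. \<theta>1 \<beta> x \<ge> 0"
    and kap: "0 \<le> \<kappa>" "\<kappa> < 1" and k: "k > 0"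
    and dwb: "\<And>q ws x. ws \<in> W B (\<mu> * q) \<Longrightarrow> x \<in> J \<Longrightarrow> dw \<theta> \<theta>1 ws x \<le> \<kappa> ^ q"
  shows "\<forall>x\<in>J. g x \<ge> 0"
proof -
  have E: "\<forall>x\<in>J. (\<Sum>ws\<in>W B n. bw b s \<theta> ws x * v (theta_word \<theta> ws x)) = lam ^ n * v x" for n
  proof (induction n)
    case 0
    then show ?case by (simp add: W_0)
  next
    case (Suc n)
    show ?case
    proof
      fix x assume x: "x \<in> J"
      have "(\<Sum>ws\<in>W B (Suc n). bw b s \<theta> ws x * v (theta_word \<theta> ws x))
          = (\<Sum>j\<in>B. b j x powr s * (\<Sum>ws\<in>W B n. bw b s \<theta> ws (\<theta> j x) * v (theta_word \<theta> ws (\<theta> j x))))"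
        by (simp add: sum_W_Suc[OF finB] sum_distrib_left mult.assoc)
      also have "\<dots> = (\<Sum>j\<in>B. b j x powr s * (lam ^ n * v (\<theta> j x)))"
        using Suc.IH mapsJ x by (intro sum.cong) auto
      also have "\<dots> = lam ^ n * (\<Sum>j\<in>B. b j x powr s * v (\<theta> j x))"
        by (simp add: sum_distrib_left mult_ac)
      also have "\<dots> = lam ^ Suc n * v x" using eig x by simp
      finally show "(\<Sum>ws\<in>W B (Suc n). bw b s \<theta> ws x * v (theta_word \<theta> ws x)) = lam ^ Suc n * v x" .
    qed
  qed
  have R: "\<forall>x\<in>J. lam ^ n * g x \<ge> - G * (\<Sum>ws\<in>W B n. bw b s \<theta> ws x * dw \<theta> \<theta>1 ws x ^ k)" for n
  proof (induction n)
    case 0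
    then show ?case using G by (auto simp: W_0 abs_le_iff)
  next
    case (Suc n)
    show ?case
    proof
      fix x assume x: "x \<in> J"
      have "- G * (\<Sum>ws\<in>W B (Suc n). bw b s \<theta> ws x * dw \<theta> \<theta>1 ws x ^ k)
          = (\<Sum>j\<in>B. b j x powr s * \<theta>1 j x ^ k * (- G * (\<Sum>ws\<in>W B n. bw b s \<theta> ws (\<theta> j x) * dw \<theta> \<theta>1 ws (\<theta> j x) ^ k)))"
      proof -
        have "- G * (\<Sum>ws\<in>W B (Suc n). bw b s \<theta> ws x * dw \<theta> \<theta>1 ws x ^ k)
           = (\<Sum>j\<in>B. \<Sum>ws\<in>W B n. - G * (bw b s \<theta> (j # ws) x * dw \<theta> \<theta>1 (j # ws) x ^ k))"
          by (simp only: sum_W_Suc[OF finB] sum_distrib_left)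
        also have "\<dots> = (\<Sum>j\<in>B. \<Sum>ws\<in>W B n. b j x powr s * \<theta>1 j x ^ k * (- G * (bw b s \<theta> ws (\<theta> j x) * dw \<theta> \<theta>1 ws (\<theta> j x) ^ k)))"
          by (intro sum.cong refl) (simp add: power_mult_distrib mult_ac)
        also have "\<dots> = (\<Sum>j\<in>B. b j x powr s * \<theta>1 j x ^ k * (- G * (\<Sum>ws\<in>W B n. bw b s \<theta> ws (\<theta> j x) * dw \<theta> \<theta>1 ws (\<theta> j x) ^ k)))"
          by (simp only: sum_distrib_left)
        finally show ?thesis .
      qed
      also have "\<dots> \<le> (\<Sum>j\<in>B. b j x powr s * \<theta>1 j x ^ k * (lam ^ n * g (\<theta> j x)))"
        using Suc.IH mapsJ x nn by (intro sum_mono mult_left_mono) auto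
      also have "\<dots> = lam ^ n * (\<Sum>j\<in>B. b j x powr s * \<theta>1 j x ^ k * g (\<theta> j x))"
        by (simp add: sum_distrib_left mult_ac)
      also have "\<dots> \<le> lam ^ n * (lam * g x)"
        using rec x lam by (intro mult_left_mono) auto
      finally show "lam ^ Suc n * g x \<ge> - G * (\<Sum>ws\<in>W B (Suc n). bw b s \<theta> ws x * dw \<theta> \<theta>1 ws x ^ k)"
        by (simp add: mult_ac)
    qed
  qed
  have G0: "G \<ge> 0" if "J \<noteq> {}" using G that by force
  show ?thesis
  proof
    fix x assume x: "x \<in> J"
    have G0: "G \<ge> 0" using G x by force
    define C where "C = G * v x / vmin"
    have C0: "C \<ge> 0" using G0 vmin x unfolding C_def by auto
    have bnd: "g x \<ge> - C * (\<kappa> ^ k) ^ q" for q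
    proof -
      let ?n = "\<mu> * q"
      have "(\<Sum>ws\<in>W B ?n. bw b s \<theta> ws x * dw \<theta> \<theta>1 ws x ^ k)
          \<le> (\<Sum>ws\<in>W B ?n. bw b s \<theta> ws x * (\<kappa> ^ q) ^ k)"
      proof (intro sum_mono mult_left_mono power_mono)
        fix ws assume ws: "ws \<in> W B ?n"
        show "dw \<theta> \<theta>1 ws x \<le> \<kappa> ^ q" by (rule dwb[OF ws x])
        show "0 \<le> dw \<theta> \<theta>1 ws x" by (rule dw_nonneg[OF mapsJ nn _ x]) (use ws in \<open>auto simp: W_def\<close>)
      qed (simp add: bw_nonneg)
      also have "\<dots> = (\<kappa> ^ k) ^ q * (\<Sum>ws\<in>W B ?n. bw b s \<theta> ws x)"
        by (simp add: sum_distrib_left power_mult[symmetric] mult_ac)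
      also have "\<dots> \<le> (\<kappa> ^ k) ^ q * (\<Sum>ws\<in>W B ?n. bw b s \<theta> ws x * v (theta_word \<theta> ws x) / vmin)"
      proof (intro mult_left_mono sum_mono)
        fix ws assume ws: "ws \<in> W B ?n"
        have "theta_word \<theta> ws x \<in> J" by (rule tw_in[OF mapsJ _ x]) (use ws in \<open>auto simp: W_def\<close>)
        then have "v (theta_word \<theta> ws x) / vmin \<ge> 1" using vmin by auto
        then show "bw b s \<theta> ws x \<le> bw b s \<theta> ws x * v (theta_word \<theta> ws x) / vmin"
          using bw_nonneg[of b s \<theta> ws x] mult_left_mono[of 1 "v (theta_word \<theta> ws x) / vmin" "bw b s \<theta> ws x"]
          by simp
      qed (use kap in simp)
      also have "\<dots> = (\<kappa> ^ k) ^ q * (lam ^ ?n * v x / vmin)"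
        using E x by (simp add: sum_divide_distrib[symmetric])
      finally have S: "(\<Sum>ws\<in>W B ?n. bw b s \<theta> ws x * dw \<theta> \<theta>1 ws x ^ k) \<le> (\<kappa> ^ k) ^ q * (lam ^ ?n * v x / vmin)" .
      have "lam ^ ?n * g x \<ge> - G * ((\<kappa> ^ k) ^ q * (lam ^ ?n * v x / vmin))"
      proof -
        have "G * (\<Sum>ws\<in>W B ?n. bw b s \<theta> ws x * dw \<theta> \<theta>1 ws x ^ k) \<le> G * ((\<kappa> ^ k) ^ q * (lam ^ ?n * v x / vmin))"
          by (rule mult_left_mono[OF S G0])
        then show ?thesis using R[of ?n] x by auto
      qed
      then have "lam ^ ?n * g x \<ge> lam ^ ?n * (- C * (\<kappa> ^ k) ^ q)"
        by (simp add: C_def mult_ac)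
      then show ?thesis using lam by (metis mult_le_cancel_left_pos zero_less_power)
    qed
    show "g x \<ge> 0"
    proof (rule ccontr)
      assume neg: "\<not> g x \<ge> 0"
      have y: "- g x / (C + 1) > 0" using neg C0 by (intro divide_pos_pos) auto
      have k1: "\<kappa> ^ k < 1" using power_strict_mono[of \<kappa> 1 k] kap k by simp
      obtain q where q: "(\<kappa> ^ k) ^ q < - g x / (C + 1)" using real_arch_pow_inv[OF y k1] by blast
      have kq: "0 \<le> (\<kappa> ^ k) ^ q" using kap by simp
      have "C * (\<kappa> ^ k) ^ q \<le> (C + 1) * (\<kappa> ^ k) ^ q" using kq by (simp add: distrib_right)
      also have "\<dots> < (C + 1) * (- g x / (C + 1))" using q C0 by (intro mult_strict_left_mono) auto
      also have "\<dots> = - g x" using C0 by (simp add: field_simps)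
      finally show False using bnd[of q] by linarith
    qed
  qed
qed



lemma pw_deriv:
  fixes f :: "real \<Rightarrow> real"
  assumes "(f has_real_derivative f') (at x within S)" "f x > 0"
  shows "((\<lambda>y. f y powr p) has_real_derivative p * f x powr (p - 1) * f') (at x within S)"
  using DERIV_chain2[OF has_real_derivative_powr[OF assms(2), of p] assms(1)] by simp

lemma comp_deriv:
  fixes v \<theta> :: "real \<Rightarrow> real"
  assumes "\<theta> ` S \<subseteq> S" "(\<theta> has_real_derivative t) (at x within S)"
    "(v has_real_derivative d) (at (\<theta> x) within S)"
  shows "((\<lambda>y. v (\<theta> y)) has_real_derivative d * t) (at x within S)"
  using DERIV_image_chain[OF DERIV_subset[OF assms(3) assms(1)] assms(2)] by (simp add: o_def)

lemma powr_id2: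
  fixes b :: real assumes "b > 0"
  shows "(s - 1) * b powr (s - 1 - 1) * b1 * b1 + b powr (s - 1) * b2
       = b powr (s - 1 - 1) * (b2 * b - (1 - s) * b1\<^sup>2)"
proof -
  have "b powr (s - 1) = b powr (s - 1 - 1) * b"
    using assms powr_add[of b "s - 1 - 1" 1] by simp
  then show ?thesis by (simp add: algebra_simps power2_eq_square)
qed

lemma eq_from_deriv:
  fixes F G :: "real \<Rightarrow> real"
  assumes "a < b" "x \<in> {a..b}" "\<forall>y\<in>{a..b}. F y = G y"
    "(F has_real_derivative d1) (at x within {a..b})"
    "(G has_real_derivative d2) (at x within {a..b})"
  shows "d1 = d2"
proof -
  have "(G has_real_derivative d1) (at x within {a..b})"
    by (rule has_field_derivative_transform_within[OF assms(4), of 1]) (use assms in auto)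
  then show ?thesis using deriv_unique_Icc[OF assms(1,2)] assms(5) by blast
qed



theorem theorem6p5:
  fixes a1 a2 s :: real and m \<mu> :: nat and \<kappa> :: real and B :: "'b set"
    and b \<theta> b1 b2 \<theta>1 \<theta>2 :: "'b \<Rightarrow> real \<Rightarrow> real"
    and v v1 v2 :: "real \<Rightarrow> real" and lam :: real and F :: "real set"
  assumes H: "a1 < a2"
    and finB: "finite B" and Bne: "B \<noteq> {}"
    and m2: "m \<ge> 2"
    and Cm_b: "\<forall>\<beta>\<in>B. Cm_on m a1 a2 (b \<beta>)"
    and Cm_theta: "\<forall>\<beta>\<in>B. Cm_on m a1 a2 (\<theta> \<beta>)"
    and b_d1: "\<forall>\<beta>\<in>B. \<forall>x\<in>{a1..a2}. (b \<beta> has_real_derivative b1 \<beta> x) (at x within {a1..a2})"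
    and b_d2: "\<forall>\<beta>\<in>B. \<forall>x\<in>{a1..a2}. (b1 \<beta> has_real_derivative b2 \<beta> x) (at x within {a1..a2})"
    and th_d1: "\<forall>\<beta>\<in>B. \<forall>x\<in>{a1..a2}. (\<theta> \<beta> has_real_derivative \<theta>1 \<beta> x) (at x within {a1..a2})"
    and th_d2: "\<forall>\<beta>\<in>B. \<forall>x\<in>{a1..a2}. (\<theta>1 \<beta> has_real_derivative \<theta>2 \<beta> x) (at x within {a1..a2})"
    and b_pos: "\<forall>\<beta>\<in>B. \<forall>x\<in>{a1..a2}. b \<beta> x > 0"
    and th_maps: "\<forall>\<beta>\<in>B. \<theta> \<beta> ` {a1<..<a2} \<subseteq> {a1<..<a2}"
    and mu: "\<mu> \<ge> 1" and kappa: "\<kappa> < 1"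
    and contr: "\<forall>ws. length ws = \<mu> \<and> set ws \<subseteq> B \<longrightarrow>
        (\<forall>x\<in>{a1..a2}. \<forall>y\<in>{a1..a2}. \<bar>theta_word \<theta> ws x - theta_word \<theta> ws y\<bar> \<le> \<kappa> * \<bar>x - y\<bar>)"
    and mono: "\<forall>\<beta>\<in>B. \<forall>u\<in>{a1<..<a2}. \<theta>1 \<beta> u \<ge> 0 \<and> \<theta>2 \<beta> u \<ge> 0 \<and> b1 \<beta> u \<ge> 0 \<and> b2 \<beta> u \<ge> 0
        \<and> b2 \<beta> u * b \<beta> u - (1 - s) * (b1 \<beta> u)\<^sup>2 \<ge> 0"
    and s_pos: "s > 0"
    and v_Cm: "Cm_on m a1 a2 v"
    and v_pos: "\<forall>x\<in>{a1..a2}. v x > 0"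
    and v_eig: "\<forall>x\<in>{a1..a2}. L_op B b \<theta> s v x = lam * v x"
    and v_d1: "\<forall>x\<in>{a1..a2}. (v has_real_derivative v1 x) (at x within {a1..a2})"
    and v_d2: "\<forall>x\<in>{a1..a2}. (v1 has_real_derivative v2 x) (at x within {a1..a2})"
  shows "(\<forall>u\<in>{a1..a2}. v1 u \<ge> 0 \<and> v2 u \<ge> 0) \<and>
         ((F \<subseteq> {a1..a2} \<and>
           (\<forall>u\<in>{a1..a2} - F. \<forall>\<beta>\<in>B. b1 \<beta> u > 0 \<and> b2 \<beta> u * b \<beta> u - (1 - s) * (b1 \<beta> u)\<^sup>2 > 0))
          \<longrightarrow> (\<forall>u\<in>{a1..a2} - F. v1 u > 0 \<and> v2 u > 0))"
proof -
  define I where "I = {a1..a2}"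
  define J where "J = {a1<..<a2}"
  have JI: "J \<subseteq> I" unfolding I_def J_def by auto
  have thc: "continuous_on I (\<theta> \<beta>)" if "\<beta> \<in> B" for \<beta>
    using th_d1 that unfolding I_def by (intro DERIV_continuous_on[where D="\<theta>1 \<beta>"]) auto
  have th1c: "continuous_on I (\<theta>1 \<beta>)" if "\<beta> \<in> B" for \<beta>
    using th_d2 that unfolding I_def by (intro DERIV_continuous_on[where D="\<theta>2 \<beta>"]) auto
  have th2c: "continuous_on I (\<theta>2 \<beta>)" if "\<beta> \<in> B" for \<beta>
    unfolding I_def using C2_cont[OF H _ m2] Cm_theta th_d1 th_d2 that by blast
  have vc: "continuous_on I v" using v_d1 unfolding I_def by (intro DERIV_continuous_on[where D=v1]) auto
  have v1c: "continuous_on I v1" using v_d2 unfolding I_def by (intro DERIV_continuous_on[where D=v2]) auto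
  have v2c: "continuous_on I v2" unfolding I_def using C2_cont[OF H v_Cm m2 v_d1 v_d2] .
  have mapsI: "\<forall>\<beta>\<in>B. \<theta> \<beta> ` I \<subseteq> I"
    using maps_closure[OF H] thc th_maps unfolding I_def by blast
  have mapsJ: "\<forall>\<beta>\<in>B. \<forall>x\<in>J. \<theta> \<beta> x \<in> J" using th_maps unfolding J_def by blast
  have mapsI': "\<forall>\<beta>\<in>B. \<forall>x\<in>I. \<theta> \<beta> x \<in> I" using mapsI by blast
  have th1I: "\<forall>\<beta>\<in>B. \<forall>x\<in>I. \<theta>1 \<beta> x \<ge> 0"
  proof
    fix \<beta> assume \<beta>: "\<beta> \<in> B"
    show "\<forall>x\<in>I. \<theta>1 \<beta> x \<ge> 0" unfolding I_def
      by (rule nonneg_closure[OF H]) (use th1c[OF \<beta>] mono \<beta> in \<open>auto simp: I_def\<close>)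
  qed
  have th2I: "\<forall>\<beta>\<in>B. \<forall>x\<in>I. \<theta>2 \<beta> x \<ge> 0"
  proof
    fix \<beta> assume \<beta>: "\<beta> \<in> B"
    show "\<forall>x\<in>I. \<theta>2 \<beta> x \<ge> 0" unfolding I_def
      by (rule nonneg_closure[OF H]) (use th2c[OF \<beta>] mono \<beta> in \<open>auto simp: I_def\<close>)
  qed
  obtain \<beta>0 where \<beta>0: "\<beta>0 \<in> B" using Bne by blast
  have lam: "lam > 0"
  proof -
    have a1I: "a1 \<in> I" using H unfolding I_def by auto
    have "0 < (\<Sum>\<beta>\<in>B. b \<beta> a1 powr s * v (\<theta> \<beta> a1))"
    proof (rule sum_pos[OF finB Bne])
      fix \<beta> assume \<beta>: "\<beta> \<in> B"
      have "\<theta> \<beta> a1 \<in> I" using mapsI' a1I \<beta> by blast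
      then show "0 < b \<beta> a1 powr s * v (\<theta> \<beta> a1)"
      proof (intro mult_pos_pos)
        have "a1 \<in> {a1..a2}" using H by auto
        then have "b \<beta> a1 > 0" using b_pos \<beta> by blast
        then show "0 < b \<beta> a1 powr s" by simp
        show "0 < v (\<theta> \<beta> a1)" using v_pos \<open>\<theta> \<beta> a1 \<in> I\<close> unfolding I_def by blast
      qed
    qed
    also have "\<dots> = lam * v a1" using v_eig a1I unfolding L_op_def I_def by auto
    finally have "0 < lam * v a1" .
    moreover have "v a1 > 0" using v_pos a1I unfolding I_def by blast
    ultimately show ?thesis by (simp add: zero_less_mult_iff)
  qed
  define R1 where "R1 = (\<lambda>y. \<Sum>\<beta>\<in>B. s * b \<beta> y powr (s - 1) * b1 \<beta> y * v (\<theta> \<beta> y)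
                       + v1 (\<theta> \<beta> y) * \<theta>1 \<beta> y * b \<beta> y powr s)"
  have E1: "lam * v1 x = R1 x" if x: "x \<in> I" for x
  proof -
    have "((\<lambda>y. L_op B b \<theta> s v y) has_real_derivative R1 x) (at x within I)"
      unfolding L_op_def R1_def
    proof (rule DERIV_sum)
      fix \<beta> assume \<beta>: "\<beta> \<in> B"
      have th: "\<theta> \<beta> x \<in> I" using mapsI' \<beta> x by blast
      show "((\<lambda>y. b \<beta> y powr s * v (\<theta> \<beta> y)) has_real_derivative
          s * b \<beta> x powr (s - 1) * b1 \<beta> x * v (\<theta> \<beta> x) + v1 (\<theta> \<beta> x) * \<theta>1 \<beta> x * b \<beta> x powr s)
          (at x within I)"
      proof -
        have bd: "(b \<beta> has_real_derivative b1 \<beta> x) (at x within I)"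
          using b_d1 \<beta> x unfolding I_def by auto
        have td: "(\<theta> \<beta> has_real_derivative \<theta>1 \<beta> x) (at x within I)"
          using th_d1 \<beta> x unfolding I_def by auto
        have bp: "b \<beta> x > 0" using b_pos \<beta> x unfolding I_def by auto
        have vd: "(v has_real_derivative v1 (\<theta> \<beta> x)) (at (\<theta> \<beta> x) within I)"
          using v_d1 th unfolding I_def by auto
        have mI: "\<theta> \<beta> ` I \<subseteq> I" using mapsI \<beta> by blast
        show ?thesis by (rule DERIV_mult[OF pw_deriv[OF bd bp] comp_deriv[OF mI td vd]])
      qed
    qed
    moreover have "((\<lambda>y. lam * v y) has_real_derivative lam * v1 x) (at x within I)"
      by (rule DERIV_cmult) (use v_d1 x in \<open>auto simp: I_def\<close>)
    moreover have "x \<in> {a1..a2}" using x unfolding I_def .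
    moreover have "\<forall>y\<in>{a1..a2}. L_op B b \<theta> s v y = lam * v y" using v_eig by blast
    ultimately show ?thesis
      using eq_from_deriv[OF H, of x "\<lambda>y. L_op B b \<theta> s v y" "\<lambda>y. lam * v y"]
      unfolding I_def by metis
  qed
  define A2 where "A2 = (\<lambda>\<beta> x. ((s * ((s - 1) * b \<beta> x powr (s - 1 - 1) * b1 \<beta> x)) * b1 \<beta> x
       + b2 \<beta> x * (s * b \<beta> x powr (s - 1))) * v (\<theta> \<beta> x)
       + (v1 (\<theta> \<beta> x) * \<theta>1 \<beta> x) * (s * b \<beta> x powr (s - 1) * b1 \<beta> x))"
  define B2 where "B2 = (\<lambda>\<beta> x. ((v2 (\<theta> \<beta> x) * \<theta>1 \<beta> x) * \<theta>1 \<beta> x + \<theta>2 \<beta> x * v1 (\<theta> \<beta> x))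
       * b \<beta> x powr s + (s * b \<beta> x powr (s - 1) * b1 \<beta> x) * (v1 (\<theta> \<beta> x) * \<theta>1 \<beta> x))"
  have E2: "lam * v2 x = (\<Sum>\<beta>\<in>B. A2 \<beta> x + B2 \<beta> x)" if x: "x \<in> I" for x
  proof -
    have "(R1 has_real_derivative (\<Sum>\<beta>\<in>B. A2 \<beta> x + B2 \<beta> x)) (at x within I)"
      unfolding R1_def
    proof (rule DERIV_sum)
      fix \<beta> assume \<beta>: "\<beta> \<in> B"
      have th: "\<theta> \<beta> x \<in> I" using mapsI' \<beta> x by blast
      have bd: "(b \<beta> has_real_derivative b1 \<beta> x) (at x within I)"
        using b_d1 \<beta> x unfolding I_def by auto
      have bd2: "(b1 \<beta> has_real_derivative b2 \<beta> x) (at x within I)"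
        using b_d2 \<beta> x unfolding I_def by auto
      have td: "(\<theta> \<beta> has_real_derivative \<theta>1 \<beta> x) (at x within I)"
        using th_d1 \<beta> x unfolding I_def by auto
      have td2: "(\<theta>1 \<beta> has_real_derivative \<theta>2 \<beta> x) (at x within I)"
        using th_d2 \<beta> x unfolding I_def by auto
      have bp: "b \<beta> x > 0" using b_pos \<beta> x unfolding I_def by auto
      have vd: "(v has_real_derivative v1 (\<theta> \<beta> x)) (at (\<theta> \<beta> x) within I)"
        using v_d1 th unfolding I_def by auto
      have vd2: "(v1 has_real_derivative v2 (\<theta> \<beta> x)) (at (\<theta> \<beta> x) within I)"
        using v_d2 th unfolding I_def by auto
      have mI: "\<theta> \<beta> ` I \<subseteq> I" using mapsI \<beta> by blast
      have dA: "((\<lambda>y. s * b \<beta> y powr (s - 1) * b1 \<beta> y * v (\<theta> \<beta> y)) has_real_derivative A2 \<beta> x) (at x within I)"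
        unfolding A2_def
        by (rule DERIV_mult[OF DERIV_mult[OF DERIV_cmult[OF pw_deriv[OF bd bp]] bd2] comp_deriv[OF mI td vd]])
      have dB: "((\<lambda>y. v1 (\<theta> \<beta> y) * \<theta>1 \<beta> y * b \<beta> y powr s) has_real_derivative B2 \<beta> x) (at x within I)"
        unfolding B2_def
        by (rule DERIV_mult[OF DERIV_mult[OF comp_deriv[OF mI td vd2] td2] pw_deriv[OF bd bp]])
      show "((\<lambda>y. s * b \<beta> y powr (s - 1) * b1 \<beta> y * v (\<theta> \<beta> y) + v1 (\<theta> \<beta> y) * \<theta>1 \<beta> y * b \<beta> y powr s)
          has_real_derivative A2 \<beta> x + B2 \<beta> x) (at x within I)"
        by (rule DERIV_add[OF dA dB])
    qed
    moreover have "((\<lambda>y. lam * v1 y) has_real_derivative lam * v2 x) (at x within I)"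
      by (rule DERIV_cmult) (use v_d2 x in \<open>auto simp: I_def\<close>)
    moreover have "x \<in> {a1..a2}" using x unfolding I_def .
    moreover have "\<forall>y\<in>{a1..a2}. R1 y = lam * v1 y" using E1 unfolding I_def by metis
    ultimately show ?thesis
      using eq_from_deriv[OF H, of x R1 "\<lambda>y. lam * v1 y"]
      unfolding I_def by metis
  qed
  have cI: "compact I" "I \<noteq> {}" using H unfolding I_def by auto
  obtain G1 where G1: "\<forall>x\<in>I. \<bar>v1 x\<bar> \<le> G1"
    using compact_imp_bounded[OF compact_continuous_image[OF v1c cI(1)]] unfolding bounded_real by auto
  obtain G2 where G2: "\<forall>x\<in>I. \<bar>v2 x\<bar> \<le> G2"
    using compact_imp_bounded[OF compact_continuous_image[OF v2c cI(1)]] unfolding bounded_real by auto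
  obtain x0 where x0: "x0 \<in> I" "\<forall>y\<in>I. v x0 \<le> v y"
    using continuous_attains_inf[OF cI vc] by blast
  have vmin: "v x0 > 0" using v_pos x0 unfolding I_def by auto
  have kap0: "0 \<le> \<kappa>"
  proof -
    let ?ws = "replicate \<mu> \<beta>0"
    have "\<bar>theta_word \<theta> ?ws a2 - theta_word \<theta> ?ws a1\<bar> \<le> \<kappa> * \<bar>a2 - a1\<bar>"
      using contr[rule_format, of ?ws a2 a1] \<beta>0 H mu by auto
    then have "0 \<le> \<kappa> * (a2 - a1)" using H by (smt (verit))
    then show ?thesis using H by (simp add: zero_le_mult_iff)
  qed
  have dwb: "\<And>q ws x. ws \<in> W B (\<mu> * q) \<Longrightarrow> x \<in> J \<Longrightarrow> dw \<theta> \<theta>1 ws x \<le> \<kappa> ^ q"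
    unfolding J_def
    by (rule dw_bound[where a=a1 and b=a2 and B=B]) (use mapsJ mapsI th_d1 mono contr in \<open>auto simp: J_def I_def\<close>)
  have eigJ: "\<forall>x\<in>J. (\<Sum>\<beta>\<in>B. b \<beta> x powr s * v (\<theta> \<beta> x)) = lam * v x"
    using v_eig JI unfolding L_op_def I_def by auto
  have nnJ: "\<forall>\<beta>\<in>B. \<forall>x\<in>J. \<theta>1 \<beta> x \<ge> 0" using mono unfolding J_def by auto
  have pos_facts: "\<forall>\<beta>\<in>B. \<forall>x\<in>I. b \<beta> x > 0 \<and> v (\<theta> \<beta> x) > 0 \<and> \<theta> \<beta> x \<in> I"
    using b_pos v_pos mapsI' unfolding I_def by auto
  have rec1: "\<forall>x\<in>J. lam * v1 x \<ge> (\<Sum>\<beta>\<in>B. b \<beta> x powr s * \<theta>1 \<beta> x ^ 1 * v1 (\<theta> \<beta> x))"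
  proof
    fix x assume x: "x \<in> J"
    have "(\<Sum>\<beta>\<in>B. b \<beta> x powr s * \<theta>1 \<beta> x ^ 1 * v1 (\<theta> \<beta> x)) \<le> R1 x"
      unfolding R1_def
    proof (rule sum_mono)
      fix \<beta> assume \<beta>: "\<beta> \<in> B"
      have xI: "x \<in> I" using x JI by auto
      have p: "b \<beta> x > 0" "v (\<theta> \<beta> x) > 0" using pos_facts \<beta> xI by auto
      have m: "b1 \<beta> x \<ge> 0" using mono \<beta> x unfolding J_def by auto
      have "0 \<le> s * b \<beta> x powr (s - 1) * b1 \<beta> x * v (\<theta> \<beta> x)"
        using s_pos p m by (intro mult_nonneg_nonneg) auto
      then show "b \<beta> x powr s * \<theta>1 \<beta> x ^ 1 * v1 (\<theta> \<beta> x) \<le>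
         s * b \<beta> x powr (s - 1) * b1 \<beta> x * v (\<theta> \<beta> x) + v1 (\<theta> \<beta> x) * \<theta>1 \<beta> x * b \<beta> x powr s"
        by (simp add: mult_ac)
    qed
    then show "lam * v1 x \<ge> (\<Sum>\<beta>\<in>B. b \<beta> x powr s * \<theta>1 \<beta> x ^ 1 * v1 (\<theta> \<beta> x))"
      using E1 x JI by auto
  qed
  have v1J: "\<forall>x\<in>J. v1 x \<ge> 0"
    by (rule decay[OF finB mapsJ lam _ vmin _ eigJ rec1 nnJ kap0 kappa _ dwb, of G1])
       (use G1 JI x0 in auto)
  have v1I: "\<forall>x\<in>I. v1 x \<ge> 0"
    using nonneg_closure[OF H] v1c v1J unfolding I_def J_def by auto
  have A2eq: "A2 \<beta> x = s * b \<beta> x powr (s - 1 - 1) * (b2 \<beta> x * b \<beta> x - (1 - s) * (b1 \<beta> x)\<^sup>2) * v (\<theta> \<beta> x)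
       + v1 (\<theta> \<beta> x) * \<theta>1 \<beta> x * (s * b \<beta> x powr (s - 1) * b1 \<beta> x)"
    if "b \<beta> x > 0" for \<beta> x
  proof -
    have "s * ((s - 1) * b \<beta> x powr (s - 1 - 1) * b1 \<beta> x) * b1 \<beta> x + b2 \<beta> x * (s * b \<beta> x powr (s - 1))
        = s * ((s - 1) * b \<beta> x powr (s - 1 - 1) * b1 \<beta> x * b1 \<beta> x + b \<beta> x powr (s - 1) * b2 \<beta> x)"
      by (simp add: algebra_simps)
    also have "\<dots> = s * (b \<beta> x powr (s - 1 - 1) * (b2 \<beta> x * b \<beta> x - (1 - s) * (b1 \<beta> x)\<^sup>2))"
      using powr_id2[OF that] by simp
    finally show ?thesis unfolding A2_def by (simp add: mult_ac)
  qed
  have rec2: "\<forall>x\<in>J. lam * v2 x \<ge> (\<Sum>\<beta>\<in>B. b \<beta> x powr s * \<theta>1 \<beta> x ^ 2 * v2 (\<theta> \<beta> x))"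
  proof
    fix x assume x: "x \<in> J"
    have xI: "x \<in> I" using x JI by auto
    have "(\<Sum>\<beta>\<in>B. b \<beta> x powr s * \<theta>1 \<beta> x ^ 2 * v2 (\<theta> \<beta> x)) \<le> (\<Sum>\<beta>\<in>B. A2 \<beta> x + B2 \<beta> x)"
    proof (rule sum_mono)
      fix \<beta> assume \<beta>: "\<beta> \<in> B"
      have m: "\<theta>1 \<beta> x \<ge> 0 \<and> \<theta>2 \<beta> x \<ge> 0 \<and> b1 \<beta> x \<ge> 0 \<and> b2 \<beta> x \<ge> 0
        \<and> b2 \<beta> x * b \<beta> x - (1 - s) * (b1 \<beta> x)\<^sup>2 \<ge> 0" using mono \<beta> x unfolding J_def by auto
      have p: "b \<beta> x > 0" "v (\<theta> \<beta> x) > 0" "\<theta> \<beta> x \<in> I" using pos_facts \<beta> xI by auto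
      have v1t: "v1 (\<theta> \<beta> x) \<ge> 0" using v1I p by auto
      have "A2 \<beta> x \<ge> 0" unfolding A2eq[OF p(1)]
        using m p v1t s_pos by (intro add_nonneg_nonneg mult_nonneg_nonneg) auto
      moreover have "B2 \<beta> x = b \<beta> x powr s * \<theta>1 \<beta> x ^ 2 * v2 (\<theta> \<beta> x)
          + (\<theta>2 \<beta> x * v1 (\<theta> \<beta> x) * b \<beta> x powr s + (s * b \<beta> x powr (s - 1) * b1 \<beta> x) * (v1 (\<theta> \<beta> x) * \<theta>1 \<beta> x))"
        unfolding B2_def by (simp add: algebra_simps power2_eq_square)
      moreover have "0 \<le> \<theta>2 \<beta> x * v1 (\<theta> \<beta> x) * b \<beta> x powr s + (s * b \<beta> x powr (s - 1) * b1 \<beta> x) * (v1 (\<theta> \<beta> x) * \<theta>1 \<beta> x)"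
        using m p v1t s_pos by (intro add_nonneg_nonneg mult_nonneg_nonneg) auto
      ultimately show "b \<beta> x powr s * \<theta>1 \<beta> x ^ 2 * v2 (\<theta> \<beta> x) \<le> A2 \<beta> x + B2 \<beta> x" by linarith
    qed
    then show "lam * v2 x \<ge> (\<Sum>\<beta>\<in>B. b \<beta> x powr s * \<theta>1 \<beta> x ^ 2 * v2 (\<theta> \<beta> x))"
      using E2 xI by auto
  qed
  have v2J: "\<forall>x\<in>J. v2 x \<ge> 0"
    by (rule decay[OF finB mapsJ lam _ vmin _ eigJ rec2 nnJ kap0 kappa _ dwb, of G2])
       (use G2 JI x0 in auto)
  have v2I: "\<forall>x\<in>I. v2 x \<ge> 0"
    using nonneg_closure[OF H] v2c v2J unfolding I_def J_def by auto
  have strict: "v1 u > 0 \<and> v2 u > 0"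
    if u: "u \<in> I" and hb: "\<forall>\<beta>\<in>B. b1 \<beta> u > 0 \<and> b2 \<beta> u * b \<beta> u - (1 - s) * (b1 \<beta> u)\<^sup>2 > 0" for u
  proof
    have "0 < R1 u" unfolding R1_def
    proof (rule sum_pos[OF finB Bne])
      fix \<beta> assume \<beta>: "\<beta> \<in> B"
      have p: "b \<beta> u > 0" "v (\<theta> \<beta> u) > 0" "\<theta> \<beta> u \<in> I" using pos_facts \<beta> u by auto
      have "0 < s * b \<beta> u powr (s - 1) * b1 \<beta> u * v (\<theta> \<beta> u)"
        using s_pos p hb \<beta> by (intro mult_pos_pos) auto
      moreover have "0 \<le> v1 (\<theta> \<beta> u) * \<theta>1 \<beta> u * b \<beta> u powr s"
        using v1I p th1I \<beta> u by (intro mult_nonneg_nonneg) auto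
      ultimately show "0 < s * b \<beta> u powr (s - 1) * b1 \<beta> u * v (\<theta> \<beta> u) + v1 (\<theta> \<beta> u) * \<theta>1 \<beta> u * b \<beta> u powr s"
        by linarith
    qed
    then show "v1 u > 0" using E1[OF u] lam by (metis zero_less_mult_pos)
    have "0 < (\<Sum>\<beta>\<in>B. A2 \<beta> u + B2 \<beta> u)"
    proof (rule sum_pos[OF finB Bne])
      fix \<beta> assume \<beta>: "\<beta> \<in> B"
      have p: "b \<beta> u > 0" "v (\<theta> \<beta> u) > 0" "\<theta> \<beta> u \<in> I" using pos_facts \<beta> u by auto
      have m: "\<theta>1 \<beta> u \<ge> 0" "\<theta>2 \<beta> u \<ge> 0" "b1 \<beta> u > 0" "b2 \<beta> u * b \<beta> u - (1 - s) * (b1 \<beta> u)\<^sup>2 > 0"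
        using th1I th2I hb \<beta> u by auto
      have vv: "v1 (\<theta> \<beta> u) \<ge> 0" "v2 (\<theta> \<beta> u) \<ge> 0" using v1I v2I p by auto
      have "0 < s * b \<beta> u powr (s - 1 - 1) * (b2 \<beta> u * b \<beta> u - (1 - s) * (b1 \<beta> u)\<^sup>2) * v (\<theta> \<beta> u)"
        using s_pos p m by (intro mult_pos_pos) auto
      moreover have "0 \<le> v1 (\<theta> \<beta> u) * \<theta>1 \<beta> u * (s * b \<beta> u powr (s - 1) * b1 \<beta> u)"
        using vv m s_pos by (intro mult_nonneg_nonneg) auto
      moreover have "0 \<le> B2 \<beta> u" unfolding B2_def
        using vv m s_pos by (intro add_nonneg_nonneg mult_nonneg_nonneg) auto
      ultimately show "0 < A2 \<beta> u + B2 \<beta> u" unfolding A2eq[OF p(1)] by linarith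
    qed
    then show "v2 u > 0" using E2[OF u] lam by (metis zero_less_mult_pos)
  qed
  show ?thesis
  proof (intro conjI impI ballI)
    fix u assume "u \<in> {a1..a2}"
    then show "v1 u \<ge> 0" "v2 u \<ge> 0" using v1I v2I unfolding I_def by auto
  next
    fix u assume F: "F \<subseteq> {a1..a2} \<and> (\<forall>u\<in>{a1..a2} - F. \<forall>\<beta>\<in>B. b1 \<beta> u > 0 \<and> b2 \<beta> u * b \<beta> u - (1 - s) * (b1 \<beta> u)\<^sup>2 > 0)"
      and u: "u \<in> {a1..a2} - F"
    then show "v1 u > 0" "v2 u > 0" using strict[of u] unfolding I_def by auto
  qed
qed


end
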